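(* Assume the standing hypotheses (H). Let $A$ be a part of $G$ with $|A|=3$, and let $L_A$ be the set of colors $c$ such that $c\in L(u)\cap L(v)$ for some good pair $\{u,v\}$ for $A$. Then $|L_A|\ge k_3+\frac{k_1+k_4}{3}$.
   Context: A list assignment $L$ assigns to each vertex $v$ a set $L(v)$ of colors; an $L$-coloring is a proper coloring $f$ with $f(v)\in L(v)$ for all $v$; $\mathrm{ch}$ denotes choice number and $\chi$ chromatic number. A part of a complete multipartite graph is one of its maximal stable sets. Standing hypotheses (H): $k\ge1$ and $n\ge 2k+2$ are integers; $G$ is a complete $k$-partite graph (exactly $k$ nonempty parts) on $n$ vertices; $L$ is a list assignment for $G$ with $|L(v)|\ge\lceil (n+k-1)/3\rceil$ for every vertex $v$; $G$ has no $L$-coloring; $\left|\bigcup_{v\in V(G)}L(v)\right|\le n-1$; and every graph $H$ with fewer than $n$ vertices satisfies $\mathrm{ch}(H)\le\max\{\chi(H),\lceil(|V(H)|+\chi(H)-1)/3\rceil\}$. For $i\in\{1,2,3,4\}$, $k_i$ denotes the number of parts of $G$ of size $i$. For a part $A$ with $|A|\ge3$, a pair $\{u,v\}\subseteq A$ of distinct vertices is a good pair for $A$ if either $|A|=3$ and $|L(u)\cap L(v)|\ge\frac{k_1+k_4+1}{3}$, or $|A|=4$ and $|L(u)\cap L(v)|\ge|L(w)\cap L(z)|$ where $\{w,z\}=A\setminus\{u,v\}$. *)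

theory Defs
  imports Complex_Main "HOL-Library.Disjoint_Sets"
begin

definition graph :: "'v set \<Rightarrow> ('v \<Rightarrow> 'v \<Rightarrow> bool) \<Rightarrow> bool" where
  "graph V E \<longleftrightarrow> finite V \<and> (\<forall>u v. E u v \<longrightarrow> u \<in> V \<and> v \<in> V \<and> u \<noteq> v \<and> E v u)"

definition proper_coloring :: "'v set \<Rightarrow> ('v \<Rightarrow> 'v \<Rightarrow> bool) \<Rightarrow> ('v \<Rightarrow> 'c) \<Rightarrow> bool" where
  "proper_coloring V E f \<longleftrightarrow> (\<forall>u\<in>V. \<forall>v\<in>V. E u v \<longrightarrow> f u \<noteq> f v)"

definition L_coloring :: "'v set \<Rightarrow> ('v \<Rightarrow> 'v \<Rightarrow> bool) \<Rightarrow> ('v \<Rightarrow> 'c set) \<Rightarrow> ('v \<Rightarrow> 'c) \<Rightarrow> bool" where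
  "L_coloring V E L f \<longleftrightarrow> proper_coloring V E f \<and> (\<forall>v\<in>V. f v \<in> L v)"

definition chi :: "'v set \<Rightarrow> ('v \<Rightarrow> 'v \<Rightarrow> bool) \<Rightarrow> nat" where
  "chi V E = (LEAST k. \<exists>f :: 'v \<Rightarrow> nat. proper_coloring V E f \<and> f ` V \<subseteq> {..<k})"

(* k-choosability: every assignment of (finite) lists of size at least k admits an L-coloring.
   Colors are taken from nat (countably many colors suffice for finite graphs). *)
definition choosable :: "'v set \<Rightarrow> ('v \<Rightarrow> 'v \<Rightarrow> bool) \<Rightarrow> nat \<Rightarrow> bool" where
  "choosable V E k \<longleftrightarrow>
     (\<forall>L :: 'v \<Rightarrow> nat set. (\<forall>v\<in>V. finite (L v) \<and> card (L v) \<ge> k) \<longrightarrow> (\<exists>f. L_coloring V E L f))"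

definition ch :: "'v set \<Rightarrow> ('v \<Rightarrow> 'v \<Rightarrow> bool) \<Rightarrow> nat" where
  "ch V E = (LEAST k. choosable V E k)"

definition cmp_edge :: "'v set set \<Rightarrow> 'v \<Rightarrow> 'v \<Rightarrow> bool" where
  "cmp_edge P u v \<longleftrightarrow> (\<exists>A\<in>P. \<exists>B\<in>P. A \<noteq> B \<and> u \<in> A \<and> v \<in> B)"

definition num_parts :: "'v set set \<Rightarrow> nat \<Rightarrow> nat" where
  "num_parts P i = card {A \<in> P. card A = i}"

definition good_pair :: "'v set set \<Rightarrow> ('v \<Rightarrow> 'c set) \<Rightarrow> 'v set \<Rightarrow> 'v \<Rightarrow> 'v \<Rightarrow> bool" where
  "good_pair P L A u v \<longleftrightarrow> u \<in> A \<and> v \<in> A \<and> u \<noteq> v \<and>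
     ((card A = 3 \<and> real (card (L u \<inter> L v)) \<ge> (real (num_parts P 1) + real (num_parts P 4) + 1) / 3)
      \<or> (card A = 4 \<and> (\<exists>w z. A - {u, v} = {w, z} \<and> card (L u \<inter> L v) \<ge> card (L w \<inter> L z))))"

end

theory Submission
  imports Defs
begin

lemma choosable_card_aux:
  assumes "finite W" "\<forall>u. \<not> F u u"
  shows "\<forall>L :: 'a \<Rightarrow> nat set. (\<forall>v\<in>W. finite (L v) \<and> card (L v) \<ge> card W) \<longrightarrow> (\<exists>f. L_coloring W F L f)"
  using assms(1)
proof (induction W rule: finite_induct)
  case empty
  then show ?case by (simp add: L_coloring_def proper_coloring_def)
next
  case (insert x W)
  show ?case
  proof (intro allI impI)
    fix L :: "'a \<Rightarrow> nat set"
    assume L: "\<forall>v\<in>insert x W. finite (L v) \<and> card (insert x W) \<le> card (L v)"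
    then have "\<forall>v\<in>W. finite (L v) \<and> card W \<le> card (L v)" using insert by auto
    with insert.IH obtain f where f: "L_coloring W F L f" by blast
    have "card (f ` W) < card (L x)" using L insert card_image_le[of W f] by auto
    then have "\<not> L x \<subseteq> f ` W" using insert card_mono[of "f ` W" "L x"] by auto
    then obtain col where col: "col \<in> L x" "col \<notin> f ` W" by blast
    define g where "g = f(x := col)"
    have "L_coloring (insert x W) F L g"
      unfolding L_coloring_def proper_coloring_def
    proof (intro conjI ballI impI)
      fix u v assume u: "u \<in> insert x W" and v: "v \<in> insert x W" and e: "F u v"
      have "u \<noteq> v" using e assms(2) by auto
      then show "g u \<noteq> g v" using u v e f col insert(2) unfolding g_def L_coloring_def proper_coloring_def
        by (cases "u = x"; cases "v = x"; auto)
    next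
      fix v assume "v \<in> insert x W"
      then show "g v \<in> L v" using f col insert(2) unfolding g_def L_coloring_def by auto
    qed
    then show "\<exists>f. L_coloring (insert x W) F L f" by blast
  qed
qed

lemma choosable_card:
  assumes "finite W" "\<forall>u. \<not> F u u"
  shows "choosable W F (card W)"
  using choosable_card_aux[of W F, OF assms] unfolding choosable_def by blast

lemma choosable_mono: "choosable W F a \<Longrightarrow> a \<le> b \<Longrightarrow> choosable W F b"
  unfolding choosable_def by (meson order_trans)

lemma choosable_ch:
  assumes "finite W" "\<forall>u. \<not> F u u"
  shows "choosable W F (ch W F)"
  unfolding ch_def using choosable_card[of W F, OF assms] by (rule LeastI)

lemma part_same: "partition_on V P \<Longrightarrow> B\<in>P \<Longrightarrow> B'\<in>P \<Longrightarrow> u\<in>B \<Longrightarrow> u\<in>B' \<Longrightarrow> B = B'"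
  using partition_onD2 disjointD by blast

lemma no_edge_same: "partition_on V P \<Longrightarrow> A\<in>P \<Longrightarrow> u\<in>A \<Longrightarrow> v\<in>A \<Longrightarrow> \<not> cmp_edge P u v"
  unfolding cmp_edge_def using part_same by metis

lemma cmp_edge_sym: "cmp_edge P u v \<Longrightarrow> cmp_edge P v u"
  unfolding cmp_edge_def by blast

lemma cmp_edge_neq: "partition_on V P \<Longrightarrow> cmp_edge P u v \<Longrightarrow> u \<noteq> v"
  unfolding cmp_edge_def using part_same by metis

lemma notriple:
  fixes V :: "'v set" and P :: "'v set set" and L :: "'v \<Rightarrow> 'c set"
    and k n :: nat and A :: "'v set"
  assumes k1: "k \<ge> 1" and nk: "n \<ge> 2 * k + 2"
    and finV: "finite V" and cardV: "card V = n"
    and part: "partition_on V P" and cardP: "card P = k"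
    and Lsz: "\<forall>v\<in>V. finite (L v) \<and> int (card (L v)) \<ge> \<lceil>(real n + real k - 1) / 3\<rceil>"
    and nocol: "\<not> (\<exists>f. L_coloring V (cmp_edge P) L f)"
    and IH: "\<forall>(W :: nat set) F. graph W F \<and> card W < n \<longrightarrow>
           ch W F \<le> max (chi W F) (nat \<lceil>(real (card W) + real (chi W F) - 1) / 3\<rceil>)"
    and AP: "A \<in> P" and cA: "card A = 3"
    and c: "\<forall>v\<in>A. c \<in> L v"
  shows False
proof -
  have AV: "A \<subseteq> V" using AP partition_onD1[OF part] by blast
  have finA: "finite A" using AV finV finite_subset by blast
  define V' where "V' = V - A"
  have cV': "card V' = n - 3" unfolding V'_def using card_Diff_subset[OF finA AV] cardV cA by simp
  obtain h :: "'v \<Rightarrow> nat" and N where h: "h ` V = {i. i<N}" "inj_on h V"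
    using finite_imp_inj_to_nat_seg[OF finV] by blast
  define C where "C = (\<Union>v\<in>V. L v)"
  have finC: "finite C" using Lsz finV unfolding C_def by auto
  obtain cc :: "'c \<Rightarrow> nat" and N2 where cc: "cc ` C = {i. i<N2}" "inj_on cc C"
    using finite_imp_inj_to_nat_seg[OF finC] by blast
  define W where "W = h ` V'"
  define F where "F = (\<lambda>a b. \<exists>u\<in>V'. \<exists>v\<in>V'. a = h u \<and> b = h v \<and> cmp_edge P u v)"
  have V'V: "V' \<subseteq> V" unfolding V'_def by blast
  have injV': "inj_on h V'" using h(2) V'V inj_on_subset by blast
  have hinv: "\<And>u. u \<in> V' \<Longrightarrow> the_inv_into V h (h u) = u"
    using the_inv_into_f_f[OF h(2)] V'V by blast
  have gW: "finite W" unfolding W_def V'_def using finV by simp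
  have gE: "\<forall>a b. F a b \<longrightarrow> a \<in> W \<and> b \<in> W \<and> a \<noteq> b \<and> F b a"
  proof (intro allI impI)
    fix a b assume "F a b"
    then obtain u v where uv: "u \<in> V'" "v \<in> V'" "a = h u" "b = h v" "cmp_edge P u v"
      unfolding F_def by blast
    have "u \<noteq> v" using cmp_edge_neq[OF part uv(5)] .
    then have "h u \<noteq> h v" using injV' uv(1,2) by (meson inj_on_contraD)
    then show "a \<in> W \<and> b \<in> W \<and> a \<noteq> b \<and> F b a"
      using uv cmp_edge_sym[OF uv(5)] unfolding W_def F_def by blast
  qed
  have graph: "graph W F" unfolding graph_def using gW gE by blast
  have irr: "\<forall>u. \<not> F u u" using graph unfolding graph_def by blast
  have cW: "card W = n - 3" unfolding W_def using card_image[OF injV'] cV' by simp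
  have n4: "n \<ge> 4" using nk k1 by linarith
  have chW: "ch W F \<le> max (chi W F) (nat \<lceil>(real (card W) + real (chi W F) - 1) / 3\<rceil>)"
  proof -
    have "card W < n" using cW n4 by simp
    then show ?thesis using IH[rule_format, of W F] graph by blast
  qed
  define P' where "P' = P - {A}"
  have finP: "finite P" using cardP k1 card.infinite by fastforce
  have cP': "card P' = k - 1" unfolding P'_def using cardP AP finP by simp
  obtain q :: "'v set \<Rightarrow> nat" and M where q: "q ` P' = {i. i<M}" "inj_on q P'"
    using finite_imp_inj_to_nat_seg[of P'] finP unfolding P'_def by blast
  have M: "M = k - 1" using card_image[OF q(2)] q(1) cP' by simp
  define part_of where "part_of u = (THE B. B \<in> P \<and> u \<in> B)" for u
  have part_of: "part_of u = B" if "B \<in> P" "u \<in> B" for u B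
    unfolding part_of_def
  proof (rule the_equality)
    show "B \<in> P \<and> u \<in> B" using that by simp
    fix B' assume "B' \<in> P \<and> u \<in> B'" then show "B' = B" using part_same[OF part, of B' B u] that by blast
  qed
  have part_ofV': "part_of u \<in> P' \<and> u \<in> part_of u" if "u \<in> V'" for u
  proof -
    have "u \<in> \<Union>P" using that partition_onD1[OF part] unfolding V'_def by blast
    then obtain B where B: "B \<in> P" "u \<in> B" by blast
    have "B \<noteq> A" using B that unfolding V'_def by blast
    then show ?thesis using part_of[OF B] B unfolding P'_def by simp
  qed
  define col where "col a = q (part_of (the_inv_into V h a))" for a
  have "proper_coloring W F col \<and> col ` W \<subseteq> {..<k-1}"
  proof
    show "proper_coloring W F col" unfolding proper_coloring_def
    proof (intro ballI impI)
      fix a b assume "a \<in> W" "b \<in> W" "F a b"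
      then obtain u v where uv: "u \<in> V'" "v \<in> V'" "a = h u" "b = h v" "cmp_edge P u v"
        unfolding F_def by blast
      then obtain Bu Bv where B: "Bu \<in> P" "Bv \<in> P" "Bu \<noteq> Bv" "u \<in> Bu" "v \<in> Bv"
        unfolding cmp_edge_def by blast
      have "part_of u = Bu" "part_of v = Bv" using part_of B by auto
      moreover have "part_of u \<in> P'" "part_of v \<in> P'" using part_ofV' uv by auto
      ultimately have "q Bu \<noteq> q Bv" using q(2) B(3) by (metis inj_on_contraD)
      then show "col a \<noteq> col b" unfolding col_def using uv hinv \<open>part_of u = Bu\<close> \<open>part_of v = Bv\<close> by simp
    qed
  next
    show "col ` W \<subseteq> {..<k-1}"
    proof
      fix x assume "x \<in> col ` W"
      then obtain u where u: "u \<in> V'" "x = col (h u)" unfolding W_def by blast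
      then have "x = q (part_of u)" unfolding col_def using hinv by simp
      then have "x \<in> q ` P'" using part_ofV' u(1) by blast
      then show "x \<in> {..<k-1}" using q(1) M by auto
    qed
  qed
  then have chi: "chi W F \<le> k - 1" unfolding chi_def by (metis (mono_tags, lifting) Least_le)
  define s where "s = nat \<lceil>(real n + real k - 1) / 3\<rceil>"
  have sk: "k + 1 \<le> s"
  proof -
    have "(real n + real k - 1) / 3 > real k" using nk by simp
    then have "\<lceil>(real n + real k - 1) / 3\<rceil> \<ge> int k + 1"
      by (metis add.commute ceiling_le_iff le_of_int_ceiling less_ceiling_iff of_int_of_nat_eq zless_imp_add1_zle)
    then show ?thesis unfolding s_def by linarith
  qed
  have ce: "\<lceil>(real (card W) + real (chi W F) - 1) / 3\<rceil> \<le> \<lceil>(real n + real k - 1) / 3\<rceil> - 1"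
  proof -
    have "(real (card W) + real (chi W F) - 1) / 3 \<le> (real n + real k - 1) / 3 - 1"
    proof -
      have "real (card W) = real n - 3" using cW n4 by (simp add: of_nat_diff)
      moreover have "real (chi W F) \<le> real k - 1" using chi k1 by (simp add: of_nat_diff)
      ultimately show ?thesis by (simp add: field_simps)
    qed
    then have "\<lceil>(real (card W) + real (chi W F) - 1) / 3\<rceil> \<le> \<lceil>(real n + real k - 1) / 3 - 1\<rceil>"
      by (rule ceiling_mono)
    then show ?thesis by simp
  qed
  have chs: "ch W F \<le> s - 1"
  proof -
    have "nat \<lceil>(real (card W) + real (chi W F) - 1) / 3\<rceil> \<le> s - 1" using ce unfolding s_def by linarith
    moreover have "chi W F \<le> s - 1" using chi sk by linarith
    ultimately show ?thesis using chW by linarith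
  qed
  have choos: "choosable W F (s - 1)"
  proof -
    have "finite W" using gW .
    then show ?thesis using choosable_mono[OF choosable_ch[of W F] chs] irr by blast
  qed
  define L' where "L' a = cc ` (L (the_inv_into V h a) - {c})" for a
  have L'u: "L' (h u) = cc ` (L u - {c})" if "u \<in> V'" for u
    unfolding L'_def using hinv that by simp
  have LC: "L u \<subseteq> C" if "u \<in> V" for u unfolding C_def using that by blast
  have "\<forall>a\<in>W. finite (L' a) \<and> card (L' a) \<ge> s - 1"
  proof
    fix a assume "a \<in> W"
    then obtain u where u: "u \<in> V'" "a = h u" unfolding W_def by blast
    have uV: "u \<in> V" using u V'V by blast
    have fin: "finite (L u)" using Lsz uV by blast
    have "int (card (L u)) \<ge> \<lceil>(real n + real k - 1) / 3\<rceil>" using Lsz uV by blast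
    then have "card (L u) \<ge> s" unfolding s_def by linarith
    moreover have "card (L' a) = card (L u - {c})"
    proof -
      have "inj_on cc (L u - {c})" using inj_on_subset[OF cc(2)] LC[OF uV] by blast
      then show ?thesis using L'u[OF u(1)] u(2) card_image by metis
    qed
    moreover have "card (L u - {c}) \<ge> card (L u) - 1" using fin by (simp add: card_Diff_singleton_if)
    ultimately show "finite (L' a) \<and> card (L' a) \<ge> s - 1" using L'u[OF u(1)] u(2) fin by simp
  qed
  then obtain f' where f': "L_coloring W F L' f'" using choos[unfolded choosable_def, rule_format, of L'] by blast
  define f where "f v = (if v \<in> A then c else the_inv_into C cc (f' (h v)))" for v
  have fv: "\<exists>d. d \<in> L v \<and> d \<noteq> c \<and> f v = d \<and> f' (h v) = cc d" if "v \<in> V'" for v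
  proof -
    have "h v \<in> W" using that unfolding W_def by blast
    then have "f' (h v) \<in> cc ` (L v - {c})" using f' L'u[OF that] unfolding L_coloring_def by auto
    then obtain d where d: "d \<in> L v" "d \<noteq> c" "f' (h v) = cc d" by blast
    have "d \<in> C" using d(1) LC that V'V by blast
    then have "f v = d" unfolding f_def using that d(3) the_inv_into_f_f[OF cc(2)] unfolding V'_def by simp
    then show ?thesis using d by blast
  qed
  have "L_coloring V (cmp_edge P) L f"
    unfolding L_coloring_def proper_coloring_def
  proof (intro conjI ballI impI)
    fix v assume "v \<in> V"
    then show "f v \<in> L v" using fv c unfolding f_def V'_def by (cases "v \<in> A") auto
  next
    fix u v assume uV: "u \<in> V" and vV: "v \<in> V" and e: "cmp_edge P u v"
    show "f u \<noteq> f v"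
    proof (cases "u \<in> A")
      case True
      then have "v \<notin> A" using no_edge_same[OF part AP] e by blast
      then show ?thesis using fv[of v] vV True unfolding V'_def f_def by auto
    next
      case False
      note uA = False
      show ?thesis
      proof (cases "v \<in> A")
        case True
        then show ?thesis using fv[of u] uV uA unfolding V'_def f_def by auto
      next
        case False
        have u': "u \<in> V'" and v': "v \<in> V'" using uV vV uA False unfolding V'_def by auto
        then have "F (h u) (h v)" unfolding F_def using e by blast
        moreover have "h u \<in> W" "h v \<in> W" using u' v' unfolding W_def by auto
        ultimately have "f' (h u) \<noteq> f' (h v)" using f' unfolding L_coloring_def proper_coloring_def by blast
        then show ?thesis using fv[OF u'] fv[OF v'] by auto
      qed
    qed
  qed
  then show False using nocol by blast
qed

theorem lemma30:
  fixes V :: "'v set" and P :: "'v set set" and L :: "'v \<Rightarrow> 'c set"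
    and k n :: nat and A :: "'v set"
  assumes "k \<ge> 1" and "n \<ge> 2 * k + 2"
    and "finite V" and "card V = n"
    and "partition_on V P" and "card P = k"
    and "\<forall>v\<in>V. finite (L v) \<and> int (card (L v)) \<ge> \<lceil>(real n + real k - 1) / 3\<rceil>"
    and "\<not> (\<exists>f. L_coloring V (cmp_edge P) L f)"
    and "card (\<Union>v\<in>V. L v) \<le> n - 1"
    and "\<forall>(W :: nat set) F. graph W F \<and> card W < n \<longrightarrow>
           ch W F \<le> max (chi W F) (nat \<lceil>(real (card W) + real (chi W F) - 1) / 3\<rceil>)"
    and "A \<in> P" and "card A = 3"
  shows "real (card {c. \<exists>u v. good_pair P L A u v \<and> c \<in> L u \<inter> L v})
           \<ge> real (num_parts P 3) + (real (num_parts P 1) + real (num_parts P 4)) / 3"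
proof -
  note nt = notriple[OF assms(1-8) assms(10-12)]
  have AV: "A \<subseteq> V" using assms(11) partition_onD1[OF assms(5)] by blast
  obtain x y z where A: "A = {x,y,z}" "x \<noteq> y" "y \<noteq> z" "x \<noteq> z"
    using assms(12) card_3_iff by metis
  have xyzV: "x \<in> V" "y \<in> V" "z \<in> V" using A AV by auto
  have fin: "finite (L x)" "finite (L y)" "finite (L z)" using assms(7) xyzV by auto
  have sz: "real (card (L v)) \<ge> (real n + real k - 1) / 3" if "v \<in> V" for v
  proof -
    have "int (card (L v)) \<ge> \<lceil>(real n + real k - 1) / 3\<rceil>" using assms(7) that by blast
    then have "real_of_int (int (card (L v))) \<ge> real_of_int \<lceil>(real n + real k - 1) / 3\<rceil>"
      using of_int_le_iff by blast
    moreover have "real_of_int \<lceil>(real n + real k - 1) / 3\<rceil> \<ge> (real n + real k - 1) / 3"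
      by (rule le_of_int_ceiling)
    ultimately show ?thesis by (metis of_int_of_nat_eq order_trans)
  qed
  have sz3: "3 * real (card (L v)) \<ge> real n + real k - 1" if "v \<in> V" for v
    using sz[OF that] by (simp add: field_simps)
  define Ixy where "Ixy = L x \<inter> L y"
  define Ixz where "Ixz = L x \<inter> L z"
  define Iyz where "Iyz = L y \<inter> L z"
  have trip: "Ixy \<inter> L z = {}"
  proof (rule ccontr)
    assume "Ixy \<inter> L z \<noteq> {}"
    then obtain c where "c \<in> L x" "c \<in> L y" "c \<in> L z" unfolding Ixy_def by blast
    then have "\<forall>v\<in>A. c \<in> L v" using A by auto
    then show False using nt by blast
  qed
  have finI: "finite Ixy" "finite Ixz" "finite Iyz" unfolding Ixy_def Ixz_def Iyz_def using fin by auto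
  have disj1: "Ixz \<inter> Iyz = {}" "Ixy \<inter> Ixz = {}" "Ixy \<inter> Iyz = {}"
    using trip unfolding Ixy_def Ixz_def Iyz_def by blast+
  define U where "U = L x \<union> L y \<union> L z"
  have e1: "card (L x) + card (L y) = card (L x \<union> L y) + card Ixy"
    unfolding Ixy_def using card_Un_Int[OF fin(1,2)] by simp
  have e2: "card (L x \<union> L y) + card (L z) = card U + card ((L x \<union> L y) \<inter> L z)"
    unfolding U_def using card_Un_Int[of "L x \<union> L y" "L z"] fin by simp
  have "(L x \<union> L y) \<inter> L z = Ixz \<union> Iyz" unfolding Ixz_def Iyz_def by blast
  then have e3: "card ((L x \<union> L y) \<inter> L z) = card Ixz + card Iyz"
    using card_Un_disjoint[OF finI(2,3) disj1(1)] by simp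
  have "U \<subseteq> (\<Union>v\<in>V. L v)" unfolding U_def using xyzV by blast
  moreover have "finite (\<Union>v\<in>V. L v)" using assms(3,7) by auto
  then have "card U \<le> card (\<Union>v\<in>V. L v)" using \<open>U \<subseteq> (\<Union>v\<in>V. L v)\<close> card_mono by blast
  then have "card U \<le> n - 1" using assms(9) by linarith
  then have cU: "real (card U) \<le> real n - 1" using assms(1,2) by linarith
  have sumI: "real (card Ixy) + real (card Ixz) + real (card Iyz) \<ge> real k"
  proof -
    have "real (card (L x)) + real (card (L y)) + real (card (L z)) =
       real (card U) + real (card Ixy) + real (card Ixz) + real (card Iyz)"
    proof -
      have neq: "card (L x) + card (L y) + card (L z) = card U + card Ixy + card Ixz + card Iyz"
        using e1 e2 e3 by linarith
      show ?thesis using arg_cong[OF neq, of real] by simp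
    qed
    then show ?thesis using sz3[OF xyzV(1)] sz3[OF xyzV(2)] sz3[OF xyzV(3)] cU by linarith
  qed
  define k1 where "k1 = num_parts P 1"
  define k3 where "k3 = num_parts P 3"
  define k4 where "k4 = num_parts P 4"
  have finP: "finite P" using assms(1,6) card.infinite by fastforce
  have kk: "k1 + k3 + k4 \<le> k"
  proof -
    let ?S1 = "{B \<in> P. card B = 1}" and ?S3 = "{B \<in> P. card B = 3}" and ?S4 = "{B \<in> P. card B = 4}"
    have f: "finite ?S1" "finite ?S3" "finite ?S4" using finP by auto
    have "card (?S1 \<union> ?S3 \<union> ?S4) = card ?S1 + card ?S3 + card ?S4"
    proof -
      have "card (?S1 \<union> ?S3) = card ?S1 + card ?S3" by (rule card_Un_disjoint) (use f in auto)
      moreover have "card (?S1 \<union> ?S3 \<union> ?S4) = card (?S1 \<union> ?S3) + card ?S4"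
        by (rule card_Un_disjoint) (use f in auto)
      ultimately show ?thesis by simp
    qed
    moreover have "card (?S1 \<union> ?S3 \<union> ?S4) \<le> card P" by (rule card_mono[OF finP]) auto
    ultimately show ?thesis unfolding k1_def k3_def k4_def num_parts_def using assms(6) by simp
  qed
  have k3pos: "k3 \<ge> 1"
  proof -
    have "A \<in> {B \<in> P. card B = 3}" using assms(11,12) by simp
    moreover have "finite {B \<in> P. card B = 3}" using finP by simp
    ultimately show ?thesis unfolding k3_def num_parts_def
      by (metis card_0_eq empty_iff less_one not_le)
  qed
  define m where "m = k1 + k4"
  have gp: "good_pair P L A u v \<longleftrightarrow> u \<in> A \<and> v \<in> A \<and> u \<noteq> v \<and>
     real (card (L u \<inter> L v)) \<ge> (real m + 1) / 3" for u v
    unfolding good_pair_def m_def k1_def k4_def using assms(12) by auto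
  define gxy where "gxy = (real (card Ixy) \<ge> (real m + 1) / 3)"
  define gxz where "gxz = (real (card Ixz) \<ge> (real m + 1) / 3)"
  define gyz where "gyz = (real (card Iyz) \<ge> (real m + 1) / 3)"
  define Sxy where "Sxy = (if gxy then Ixy else {})"
  define Sxz where "Sxz = (if gxz then Ixz else {})"
  define Syz where "Syz = (if gyz then Iyz else {})"
  have setEq: "{c. \<exists>u v. good_pair P L A u v \<and> c \<in> L u \<inter> L v} = Sxy \<union> Sxz \<union> Syz"
  proof
    show "{c. \<exists>u v. good_pair P L A u v \<and> c \<in> L u \<inter> L v} \<subseteq> Sxy \<union> Sxz \<union> Syz"
    proof
      fix c assume "c \<in> {c. \<exists>u v. good_pair P L A u v \<and> c \<in> L u \<inter> L v}"
      then obtain u v where uv: "u \<in> A" "v \<in> A" "u \<noteq> v" "real (card (L u \<inter> L v)) \<ge> (real m + 1) / 3"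
          "c \<in> L u" "c \<in> L v" using gp by blast
      have "(u = x \<and> v = y) \<or> (u = y \<and> v = x) \<or> (u = x \<and> v = z) \<or> (u = z \<and> v = x)
         \<or> (u = y \<and> v = z) \<or> (u = z \<and> v = y)" using uv(1-3) A(1) by auto
      then show "c \<in> Sxy \<union> Sxz \<union> Syz"
        using uv(4-6) unfolding Sxy_def Sxz_def Syz_def gxy_def gxz_def gyz_def Ixy_def Ixz_def Iyz_def
        by (auto simp: Int_commute)
    qed
  next
    show "Sxy \<union> Sxz \<union> Syz \<subseteq> {c. \<exists>u v. good_pair P L A u v \<and> c \<in> L u \<inter> L v}"
    proof -
      have "Sxy \<subseteq> {c. \<exists>u v. good_pair P L A u v \<and> c \<in> L u \<inter> L v}"
        unfolding Sxy_def gxy_def Ixy_def using gp[of x y] A by auto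
      moreover have "Sxz \<subseteq> {c. \<exists>u v. good_pair P L A u v \<and> c \<in> L u \<inter> L v}"
        unfolding Sxz_def gxz_def Ixz_def using gp[of x z] A by auto
      moreover have "Syz \<subseteq> {c. \<exists>u v. good_pair P L A u v \<and> c \<in> L u \<inter> L v}"
        unfolding Syz_def gyz_def Iyz_def using gp[of y z] A by auto
      ultimately show ?thesis by blast
    qed
  qed
  have finS: "finite Sxy" "finite Sxz" "finite Syz" unfolding Sxy_def Sxz_def Syz_def using finI by auto
  have cS: "card (Sxy \<union> Sxz \<union> Syz) = card Sxy + card Sxz + card Syz"
  proof -
    have "card (Sxy \<union> Sxz) = card Sxy + card Sxz"
      by (rule card_Un_disjoint) (use finS disj1 in \<open>auto simp: Sxy_def Sxz_def\<close>)
    moreover have "card (Sxy \<union> Sxz \<union> Syz) = card (Sxy \<union> Sxz) + card Syz"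
      by (rule card_Un_disjoint) (use finS disj1 in \<open>auto simp: Sxy_def Sxz_def Syz_def\<close>)
    ultimately show ?thesis by simp
  qed
  have bad: "3 * real (card I) \<le> real m" if "\<not> real (card I) \<ge> (real m + 1) / 3" for I :: "'c set"
  proof -
    have "real (3 * card I) < real (m + 1)" using that by simp
    then have "3 * card I < m + 1" by (simp only: of_nat_less_iff)
    then have "3 * card I \<le> m" by simp
    then show ?thesis by (metis of_nat_le_iff of_nat_mult of_nat_numeral)
  qed
  have rk: "real k1 + real k3 + real k4 \<le> real k" using kk by (metis of_nat_add of_nat_le_iff)
  have r3: "real k3 \<ge> 1" using k3pos by simp
  have rm: "real m = real k1 + real k4" unfolding m_def by simp
  have bxy: "\<not> gxy \<Longrightarrow> 3 * real (card Ixy) \<le> real m" using bad unfolding gxy_def by blast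
  have bxz: "\<not> gxz \<Longrightarrow> 3 * real (card Ixz) \<le> real m" using bad unfolding gxz_def by blast
  have byz: "\<not> gyz \<Longrightarrow> 3 * real (card Iyz) \<le> real m" using bad unfolding gyz_def by blast
  have cxy: "real (card Sxy) = (if gxy then real (card Ixy) else 0)" by (simp add: Sxy_def)
  have cxz: "real (card Sxz) = (if gxz then real (card Ixz) else 0)" by (simp add: Sxz_def)
  have cyz: "real (card Syz) = (if gyz then real (card Iyz) else 0)" by (simp add: Syz_def)
  have dxy: "real (card Sxy) = real (card Ixy) \<or> (real (card Sxy) = 0 \<and> 3 * real (card Ixy) \<le> real m)"
    using cxy bxy by (cases gxy) auto
  have dxz: "real (card Sxz) = real (card Ixz) \<or> (real (card Sxz) = 0 \<and> 3 * real (card Ixz) \<le> real m)"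
    using cxz bxz by (cases gxz) auto
  have dyz: "real (card Syz) = real (card Iyz) \<or> (real (card Syz) = 0 \<and> 3 * real (card Iyz) \<le> real m)"
    using cyz byz by (cases gyz) auto
  have final: "real (card Sxy) + real (card Sxz) + real (card Syz) \<ge> real k3 + real m / 3"
    by (insert dxy dxz dyz sumI rk r3 rm, (elim disjE conjE; linarith))
  show ?thesis unfolding setEq using cS final rm unfolding k1_def k3_def k4_def by simp
qed

end
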